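(* Let $\gamma>1$ and let $C_{tr}(\gamma)$ be a constant such that for all self-adjoint operators $A$, $B$ in a complex Hilbert space with $\sigma(A)\subset[0,\infty)$ and all $t>0$ for which $D_t=e^{-tB}-e^{-tA}$ is of trace class, one has $\sum_{\lambda\in \sigma^-(B)} |\lambda|^{\gamma}\leq C_{tr}(\gamma)t^{-\gamma}\|D_t\|_{tr}$. Then $$C_{tr}(\gamma)\geq -W(-\gamma e^{-\gamma})\big(\gamma+W(-\gamma e^{-\gamma})\big)^{\gamma-1}.$$
   Context: $\sigma^-(B)=\sigma(B)\cap(-\infty,0)$; sums over $\sigma^-(B)$ are taken with multiplicity. $\|\cdot\|_{tr}$ is the trace norm. $W$ is the Lambert W-function, defined on $[-e^{-1},\infty)$ as the inverse of $x\mapsto xe^x$ (principal branch, with values in $[-1,\infty)$). *)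

theory Defs
  imports "HOL-Analysis.Analysis" "Jordan_Normal_Form.Spectral_Radius" "Jordan_Normal_Form.Schur_Decomposition"
begin

text \<open>Finite-dimensional model: operators on the complex Hilbert space C^n are complex n x n matrices.\<close>

definition selfadjoint_mat :: "nat \<Rightarrow> complex mat \<Rightarrow> bool" where
  "selfadjoint_mat n A \<longleftrightarrow> A \<in> carrier_mat n n \<and> mat_adjoint A = A"

definition mat_exp :: "complex mat \<Rightarrow> complex mat" where
  "mat_exp M = mat (dim_row M) (dim_col M)
     (\<lambda>(i,j). \<Sum>k. (M ^\<^sub>m k) $$ (i,j) / of_nat (fact k))"

definition neg_spec_sum :: "real \<Rightarrow> complex mat \<Rightarrow> real" where
  "neg_spec_sum \<gamma> B = (\<Sum>z \<in> {z \<in> spectrum B. z \<in> \<real> \<and> Re z < 0}.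
      real (order z (char_poly B)) * (cmod z) powr \<gamma>)"

definition trace_norm :: "complex mat \<Rightarrow> real" where
  "trace_norm D = (\<Sum>\<mu> \<in> spectrum (mat_adjoint D * D).
      real (order \<mu> (char_poly (mat_adjoint D * D))) * sqrt (cmod \<mu>))"

text \<open>Principal branch of the Lambert W function on [-1/e, infinity).\<close>
definition lambertW :: "real \<Rightarrow> real" where
  "lambertW x = (THE w. w \<ge> -1 \<and> w * exp w = x)"

end

theory Submission imports Defs begin
definition m1 :: "complex \<Rightarrow> complex mat" where "m1 c = mat 1 1 (\<lambda>_. c)"
lemma m1_jb: "m1 c = jordan_block 1 c"
  unfolding m1_def jordan_block_def by (rule eq_matI) auto
lemma m1_carrier[simp]: "m1 c \<in> carrier_mat 1 1" unfolding m1_def by auto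
lemma m1_char: "char_poly (m1 c) = [:-c,1:]" unfolding m1_jb jordan_block_char_poly by simp
lemma m1_spec: "spectrum (m1 c) = {c}"
  by (subst spectrum_root_char_poly[OF m1_carrier]) (auto simp: m1_char)
lemma m1_order: "order c (char_poly (m1 c)) = 1"
  unfolding m1_char using order_power_n_n[of c 1] by simp
lemma m1_adj: "mat_adjoint (m1 c) = m1 (cnj c)"
  unfolding m1_def mat_adjoint_def by (rule eq_matI) (auto simp: mat_of_rows_def cols_def)
lemma m1_mult: "m1 a * m1 b = m1 (a*b)"
  unfolding m1_def by (rule eq_matI) (auto simp: scalar_prod_def)
lemma m1_minus: "m1 a - m1 b = m1 (a-b)"
  unfolding m1_def by (rule eq_matI) auto
lemma m1_smult: "c \<cdot>\<^sub>m m1 a = m1 (c*a)"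
  unfolding m1_def by (rule eq_matI) auto
lemma m1_pow: "m1 a ^\<^sub>m k = m1 (a^k)"
proof (induction k)
  case 0 show ?case unfolding m1_def by (auto intro!: eq_matI)
next
  case (Suc k) then show ?case by (simp add: m1_mult mult.commute)
qed
lemma m1_exp: "mat_exp (m1 a) = m1 (exp a)"
proof -
  have "(\<Sum>k. a^k / of_nat (fact k)) = exp a"
    by (simp add: exp_def scaleR_conv_of_real divide_inverse mult.commute)
  then show ?thesis unfolding mat_exp_def m1_pow by (auto simp: m1_def intro!: eq_matI)
qed

lemma m1_selfadj: "c \<in> \<real> \<Longrightarrow> selfadjoint_mat 1 (m1 c)"
  using m1_carrier[of c] unfolding selfadjoint_mat_def m1_adj by (auto simp: Reals_cnj_iff)

lemma trace_norm_m1: "trace_norm (m1 d) = cmod d"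
proof -
  have "trace_norm (m1 d) = sqrt (cmod (cnj d * d))"
    unfolding trace_norm_def m1_adj m1_mult m1_spec using m1_order[of "cnj d * d"] by simp
  also have "\<dots> = cmod d" by (simp add: norm_mult real_sqrt_mult)
  finally show ?thesis .
qed

lemma neg_spec_m1: "neg_spec_sum g (m1 (-1)) = 1"
proof -
  have "{z \<in> spectrum (m1 (-1)). z \<in> \<real> \<and> Re z < 0} = {-1}" by (auto simp: m1_spec)
  then show ?thesis unfolding neg_spec_sum_def by (simp add: m1_order)
qed

lemma xexp_strict: assumes "-1 \<le> a" "a < b" shows "a * exp a < b * exp (b::real)"
proof (rule DERIV_pos_imp_increasing_open[OF assms(2)])
  fix x assume "a < x" "x < b"
  then show "\<exists>y. ((\<lambda>x. x * exp x) has_real_derivative y) (at x) \<and> 0 < y" using assms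
  proof (intro exI[of _ "exp x * (1 + x)"] conjI)
    show "((\<lambda>x. x * exp x) has_real_derivative exp x * (1 + x)) (at x)"
      by (auto intro!: derivative_eq_intros simp: algebra_simps)
    show "0 < exp x * (1 + x)" using assms \<open>a < x\<close> by simp
  qed
qed (intro continuous_intros)

lemma lambertW_prop:
  assumes "y \<le> 0" "- exp (-1) \<le> y"
  shows "lambertW y \<ge> -1 \<and> lambertW y * exp (lambertW y) = y"
proof -
  have "continuous_on {-1..0} (\<lambda>x::real. x * exp x)" by (intro continuous_intros)
  then obtain w where w: "-1 \<le> w" "w \<le> 0" "w * exp w = y"
    using IVT'[of "\<lambda>x. x * exp x" "-1" y 0] assms by auto
  have "\<exists>!w. w \<ge> -1 \<and> w * exp w = y"
  proof (rule ex1I[of _ w])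
    fix v assume v: "v \<ge> -1 \<and> v * exp v = y"
    show "v = w"
    proof (rule ccontr)
      assume "v \<noteq> w"
      then have "v < w \<or> w < v" by auto
      then show False using xexp_strict[of v w] xexp_strict[of w v] v w by auto
    qed
  qed (use w in auto)
  then show ?thesis unfolding lambertW_def by (rule theI')
qed

lemma exp_s_eq: assumes g: "(g::real) > 1" and w: "w * exp w = - g * exp (-g)" and wneg: "w < 0"
 shows "exp (g + w) - 1 = (g + w) / (-w)"
proof -
  have "w * exp (g + w) = (w * exp w) * exp g" by (simp add: exp_add)
  also have "\<dots> = -g * (exp (-g) * exp g)" using w by simp
  also have "\<dots> = -g" by (simp flip: exp_add)
  finally have e: "w * exp (g + w) = -g" .
  show ?thesis using wneg e by (simp add: field_simps)
qed

lemma gexp_le: "(g::real) > 1 \<Longrightarrow> g * exp (-g) \<le> exp (-1)"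
proof -
  assume "g > 1"
  have "g \<le> exp (g - 1)" using exp_ge_add_one_self[of "g - 1"] by simp
  then have "g * exp (-g) \<le> exp (g - 1) * exp (-g)" by simp
  also have "\<dots> = exp (-1)" by (simp flip: exp_add)
  finally show ?thesis .
qed

lemma final_arith: assumes spos: "(s::real) > 0" and wneg: "w < 0" and g: "g > 1"
  and k: "1 \<le> C * s powr (-g) * (s / (-w))"
  shows "s powr (g - 1) * (-w) \<le> C"
proof -
  have P: "s powr g > 0" using spos by simp
  have sg: "s powr g = s * s powr (g - 1)" using spos powr_add[of s 1 "g - 1"] by simp
  have e: "C * s powr (-g) * (s / (-w)) = (C * s) / (s powr g * (-w))"
    by (simp add: powr_minus divide_inverse)
  have D: "0 < s powr g * (-w)" using P wneg by (simp add: mult_pos_neg)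
  have "1 * (s powr g * (-w)) \<le> C * s" using k unfolding e by (simp only: pos_le_divide_eq[OF D])
  then have "s powr g * (-w) \<le> C * s" by simp
  then have "s * (s powr (g - 1) * (-w)) \<le> s * C" unfolding sg by (simp add: algebra_simps)
  then show ?thesis by (simp only: mult_le_cancel_left_pos[OF spos])
qed

theorem proposition1:
  fixes \<gamma> C :: real
  assumes "\<gamma> > 1"
    and "\<forall>(n::nat) (A::complex mat) (B::complex mat) (t::real).
           selfadjoint_mat n A \<and> selfadjoint_mat n B \<and> spectrum A \<subseteq> {z. z \<in> \<real> \<and> Re z \<ge> 0} \<and> t > 0
           \<longrightarrow> neg_spec_sum \<gamma> B \<le>
               C * t powr (-\<gamma>) * trace_norm (mat_exp ((- complex_of_real t) \<cdot>\<^sub>m B) - mat_exp ((- complex_of_real t) \<cdot>\<^sub>m A))"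
  shows "C \<ge> - lambertW (- \<gamma> * exp (- \<gamma>)) * (\<gamma> + lambertW (- \<gamma> * exp (- \<gamma>))) powr (\<gamma> - 1)"
proof -
  have key: "1 \<le> C * s powr (-\<gamma>) * (exp s - 1)" if "s > 0" for s
  proof -
    have "neg_spec_sum \<gamma> (m1 (-1)) \<le> C * s powr (-\<gamma>) * trace_norm (mat_exp ((- complex_of_real s) \<cdot>\<^sub>m m1 (-1)) - mat_exp ((- complex_of_real s) \<cdot>\<^sub>m m1 0))"
      using assms(2)[rule_format, of 1 "m1 0" "m1 (-1)" s] that
      using m1_selfadj[of 0] m1_selfadj[of "-1"] by (auto simp: m1_spec)
    moreover have "trace_norm (mat_exp ((- complex_of_real s) \<cdot>\<^sub>m m1 (-1)) - mat_exp ((- complex_of_real s) \<cdot>\<^sub>m m1 0)) = exp s - 1"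
    proof -
      have "trace_norm (mat_exp ((- complex_of_real s) \<cdot>\<^sub>m m1 (-1)) - mat_exp ((- complex_of_real s) \<cdot>\<^sub>m m1 0))
          = cmod (complex_of_real (exp s) - 1)"
        unfolding m1_smult m1_exp m1_minus trace_norm_m1 by (simp add: exp_of_real)
      also have "\<dots> = cmod (complex_of_real (exp s - 1))" by simp
      also have "\<dots> = exp s - 1" using that by (simp only: norm_of_real) simp
      finally show ?thesis .
    qed
    ultimately show ?thesis by (simp add: neg_spec_m1)
  qed
  define y where "y = - \<gamma> * exp (- \<gamma>)"
  define w where "w = lambertW y"
  have y1: "- exp (-1) \<le> y" unfolding y_def using gexp_le[OF assms(1)] by simp
  have y0: "y < 0" unfolding y_def using assms(1) by simp
  from lambertW_prop[OF _ y1] y0 have w: "w \<ge> -1" "w * exp w = y" unfolding w_def by auto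
  have wneg: "w < 0" proof (rule ccontr)
    assume "\<not> w < 0"
    then have "0 \<le> w * exp w" by simp
    then show False using w y0 by simp
  qed
  define s where "s = \<gamma> + w"
  have spos: "s > 0" using w assms(1) unfolding s_def by simp
  have es: "exp s - 1 = s / (-w)" unfolding s_def using exp_s_eq[OF assms(1) _ wneg] w(2) unfolding y_def by simp
  have "1 \<le> C * s powr (-\<gamma>) * (s / (-w))" using key[OF spos] es by simp
  from final_arith[OF spos wneg assms(1) this] have "s powr (\<gamma> - 1) * (-w) \<le> C" .
  then show ?thesis unfolding w_def y_def s_def by (simp add: algebra_simps)
qed

end
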